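(* Let $a\in[-1,1/3]$, $a\neq0$. For $\theta\in(2\pi/3,\pi)$ define \[ \zeta(\theta)=\frac{(2a-1)\cos\theta+\sqrt{(1-4a)\cos^2\theta+a}}{1-4a\cos^2\theta},\qquad z(\theta)=\frac{a\zeta(\theta)}{(2\cos\theta+\zeta(\theta))(1+2\zeta(\theta)\cos\theta)}, \] where at the (possible) point $\theta=\cos^{-1}(-1/(2\sqrt a))$ (occurring when $1/4<a\le1/3$) $z$ is extended by continuity (this singularity is removable). Then $z(\theta)$ is increasing on $(2\pi/3,\pi)$. *)

theory Defs
  imports Complex_Main
begin

definition zeta :: "real \<Rightarrow> real \<Rightarrow> real" where
  "zeta a \<theta> = ((2*a - 1) * cos \<theta> + sqrt ((1 - 4*a) * (cos \<theta>)^2 + a)) / (1 - 4*a*(cos \<theta>)^2)"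

definition z_raw :: "real \<Rightarrow> real \<Rightarrow> real" where
  "z_raw a \<theta> = a * zeta a \<theta> / ((2 * cos \<theta> + zeta a \<theta>) * (1 + 2 * zeta a \<theta> * cos \<theta>))"

definition z_fun :: "real \<Rightarrow> real \<Rightarrow> real" where
  "z_fun a \<theta> = (if 1 - 4*a*(cos \<theta>)^2 \<noteq> 0 then z_raw a \<theta> else Lim (at \<theta>) (z_raw a))"

end

theory Submission
  imports Defs
begin

definition Dq :: "real \<Rightarrow> real \<Rightarrow> real" where
  "Dq a c = (1-4*a)*c^2 + a"
definition Uf :: "real \<Rightarrow> real \<Rightarrow> real" where
  "Uf a c = (sqrt (Dq a c) + c)/a"
definition Gf :: "real \<Rightarrow> real \<Rightarrow> real" where
  "Gf a c = (Uf a c - 2*c)/(Uf a c)^3"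

locale setup_ac =
  fixes a c :: real
  assumes a1: "-1 \<le> a" and a2: "a \<le> 1/3" and a0: "a \<noteq> 0"
    and c1: "-1 < c" and c2: "c < -1/2"
begin

lemma c_sq: "c^2 < 1" "1/4 < c^2"
proof -
  have "(-c)^2 < 1^2" using c1 c2 by (intro power_strict_mono) auto
  then show "c^2 < 1" by simp
  have "(1/2)^2 < (-c)^2" using c1 c2 by (intro power_strict_mono) auto
  then show "1/4 < c^2" by (simp add: power2_eq_square)
qed

lemma D_pos: "Dq a c > 0"
proof -
  have "Dq a c = c^2 + a*(1 - 4*c^2)" by (simp add: Dq_def algebra_simps)
  moreover have "a*(1-4*c^2) \<ge> -(1/3)*(4*c^2 - 1)"
  proof (cases "a \<ge> 0")
    case True
    have "a*(4*c^2-1) \<le> (1/3)*(4*c^2-1)" using True a2 c_sq by (intro mult_right_mono) auto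
    then show ?thesis by (simp add: algebra_simps)
  next
    case False
    then have "a*(1-4*c^2) \<ge> 0" using c_sq by (intro mult_nonpos_nonpos) auto
    moreover have "-(1/3)*(4*c^2-1) \<le> (0::real)" using c_sq by simp
    ultimately show ?thesis by linarith
  qed
  moreover have "-(1/3)*(4*c^2-1) = 1/3 - (4/3)*c^2" by (simp add: algebra_simps)
  ultimately show ?thesis using c_sq by linarith
qed

definition s where "s = sqrt (Dq a c)"
definition u where "u = Uf a c"

lemma s_pos: "s > 0" using D_pos by (simp add: s_def)
lemma s_sq: "s^2 = (1-4*a)*c^2 + a" using D_pos by (simp add: s_def Dq_def)
lemma u_def2: "a*u = s + c" using a0 by (simp add: u_def Uf_def s_def)

lemma u_neg: "u < 0"
proof -
  have diff: "s^2 - c^2 = a*(1-4*c^2)" using s_sq by (simp add: algebra_simps)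
  show ?thesis
  proof (cases "a > 0")
    case True
    have "a*(1-4*c^2) < 0" using True c_sq by (intro mult_pos_neg) auto
    then have "s^2 < c^2" using diff by linarith
    then have "s^2 < (-c)^2" by simp
    then have "s < -c" using power_less_imp_less_base[of s 2 "-c"] c2 by linarith
    then have "a*u < 0" using u_def2 by simp
    then show ?thesis using True by (simp add: mult_less_0_iff)
  next
    case False
    then have an: "a < 0" using a0 by simp
    have "a*(1-4*c^2) > 0" using an c_sq by (intro mult_neg_neg) auto
    then have "s^2 > c^2" using diff by linarith
    then have "(-c)^2 < s^2" by simp
    then have "s > -c" using power_less_imp_less_base[of "-c" 2 s] s_pos by linarith
    then have "a*u > 0" using u_def2 by simp
    then show ?thesis using an by (simp add: zero_less_mult_iff)
  qed
qed

lemma u_quad: "a*u^2 = 2*c*u - 4*c^2 + 1"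
proof -
  have "a*(a*u^2) = a*(2*c*u - 4*c^2 + 1)"
  proof -
    have "a*(a*u^2) = (a*u)^2" by (simp add: power2_eq_square)
    also have "\<dots> = s^2 + 2*s*c + c^2" by (simp add: u_def2 power2_eq_square algebra_simps)
    also have "\<dots> = 2*c*(a*u) - 4*a*c^2 + a"
      using s_sq u_def2 by (simp add: algebra_simps power2_eq_square)
    also have "\<dots> = a*(2*c*u - 4*c^2 + 1)" by (simp add: algebra_simps)
    finally show ?thesis .
  qed
  then show ?thesis using a0 by simp
qed

lemma zeta_eq: "cos t = c \<Longrightarrow> zeta a t = ((2*a-1)*c + s)/(1 - 4*a*c^2)"
  by (simp add: zeta_def s_def Dq_def)

lemma zraw_eq: assumes "cos t = c" shows "z_raw a t = Gf a c"
proof -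
  define q where "q = 1 - 4*a*c^2"
  define w where "w = u - 2*c"
  have w_def2: "a*w = s + (1-2*a)*c" using u_def2 by (simp add: w_def algebra_simps)
  have prod: "((2*a-1)*c + s)*(s + (1-2*a)*c) = a*q"
    using s_sq by (simp add: q_def algebra_simps power2_eq_square)
  have G: "Gf a c = w/u^3" by (simp add: Gf_def u_def w_def)
  have zt: "zeta a t = ((2*a-1)*c + s)/q" using zeta_eq[OF assms] by (simp add: q_def)
  have f1: "(2*a-1)*c + s > 0"
  proof -
    have "(2*a-1)*c > 0" using a2 c2 by (intro mult_neg_neg) auto
    then show ?thesis using s_pos by linarith
  qed
  show ?thesis
  proof (cases "q = 0")
    case True
    then have "s + (1-2*a)*c = 0" using prod f1 by simp
    then have "w = 0" using w_def2 a0 by simp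
    then show ?thesis using G zt True by (simp add: z_raw_def)
  next
    case False
    have wz: "w \<noteq> 0" using prod w_def2 False a0 by auto
    have zw: "zeta a t = 1/w"
    proof -
      have "zeta a t * (a*w) = a" using zt prod w_def2 False by simp
      then show ?thesis using wz a0 by (simp add: field_simps)
    qed
    have uw: "u = w + 2*c" by (simp add: w_def)
    have qd: "a*u^2 = 2*c*w + 1" using u_quad by (simp add: uw algebra_simps power2_eq_square)
    have "(2 * cos t + zeta a t) * (1 + 2 * zeta a t * cos t) = (2*c*w+1)*(w+2*c)/w^2"
      using wz by (simp add: zw assms field_simps power2_eq_square)
    also have "\<dots> = a*u^3/w^2" using qd uw by (simp add: power3_eq_cube power2_eq_square)
    finally have den: "(2 * cos t + zeta a t) * (1 + 2 * zeta a t * cos t) = a*u^3/w^2" .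
    have "z_raw a t = (a/w) / (a*u^3/w^2)" unfolding z_raw_def den using zw by simp
    also have "\<dots> = w/u^3" using wz a0 u_neg by (simp add: field_simps power2_eq_square power3_eq_cube)
    finally show ?thesis using G by simp
  qed
qed

definition Up where "Up = ((1-4*a)*c/s + 1)/a"

lemma U_deriv: "DERIV (Uf a) c :> Up"
proof -
  have d: "DERIV (\<lambda>x. (1-4*a)*x^2+a) c :> (1-4*a)*(2*c)"
    by (auto intro!: derivative_eq_intros)
  have d2: "DERIV (\<lambda>x. sqrt ((1-4*a)*x^2+a)) c :> inverse (sqrt ((1-4*a)*c^2+a)) / 2 * ((1-4*a)*(2*c))"
    using DERIV_chain2[OF DERIV_real_sqrt d] D_pos by (simp add: Dq_def)
  have d3: "DERIV (\<lambda>x. (sqrt ((1-4*a)*x^2+a) + x)/a) c :>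
     (inverse (sqrt ((1-4*a)*c^2+a)) / 2 * ((1-4*a)*(2*c)) + 1)/a"
    by (intro DERIV_cdivide DERIV_add d2 DERIV_ident)
  have ss: "sqrt ((1-4*a)*c^2+a) = s" by (simp add: s_def Dq_def)
  have eq: "(inverse (sqrt ((1-4*a)*c^2+a)) / 2 * ((1-4*a)*(2*c)) + 1)/a = Up"
    unfolding ss Up_def using s_pos a0 by (simp add: field_simps)
  have ff: "Uf a = (\<lambda>x. (sqrt ((1-4*a)*x^2+a) + x)/a)" by (rule ext) (simp add: Uf_def Dq_def)
  show ?thesis using d3 unfolding eq ff .
qed

lemma Up_eq: "Up = (u - 4*c)/s"
proof -
  have e1: "Up = ((1-4*a)*c + s)/(a*s)" using s_pos a0 by (simp add: Up_def field_simps)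
  have e2: "(u-4*c)/s = (a*u - 4*a*c)/(a*s)" using s_pos a0 by (simp add: field_simps)
  show ?thesis unfolding e1 e2 u_def2 by (simp add: algebra_simps)
qed

definition E where "E = ((Up - 2)*u^3 - 3*u^2*Up*(u - 2*c))/(u^3)^2"

lemma G_deriv: "DERIV (Gf a) c :> E"
proof -
  have d1: "DERIV (\<lambda>x. Uf a x - 2*x) c :> Up - 2"
  proof -
    have "DERIV (\<lambda>x. 2*x) c :> 2" by (auto intro!: derivative_eq_intros)
    from DERIV_diff[OF U_deriv this] show ?thesis .
  qed
  have d2: "DERIV (\<lambda>x. (Uf a x)^3) c :> 3 * u^2 * Up"
    using DERIV_power[OF U_deriv, of 3] by (simp add: u_def algebra_simps)
  have "DERIV (\<lambda>x. (Uf a x - 2*x)/(Uf a x)^3) c :> ((Up - 2)*(Uf a c)^3 - 3 * u^2 * Up * (Uf a c - 2*c))/((Uf a c)^3)^2"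
    using DERIV_quotient[OF d1 d2] u_neg by (simp add: u_def power2_eq_square)
  moreover have "Gf a = (\<lambda>x. (Uf a x - 2*x)/(Uf a x)^3)" by (rule ext) (simp add: Gf_def)
  ultimately show ?thesis by (simp add: E_def u_def)
qed

lemma E_neg: "E < 0"
proof -
  have key: "(Up - 2)*u^3 - 3*u^2*Up*(u - 2*c) = u^2 * (-2*((u-3*c)^2 + 1 - c^2)/s)"
  proof -
    have sa: "s = a*u - c" using u_def2 by simp
    have "(Up - 2)*u^3 - 3*u^2*Up*(u - 2*c) = u^2 * (Up*(6*c - 2*u) - 2*u)"
      by (simp add: algebra_simps power2_eq_square power3_eq_cube)
    also have "Up*(6*c - 2*u) - 2*u = ((u-4*c)*(6*c-2*u) - 2*u*s)/s"
      using s_pos by (simp add: Up_eq field_simps)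
    also have "(u-4*c)*(6*c-2*u) - 2*u*s = -2*((u-3*c)^2 + 1 - c^2)"
    proof -
      have "u*s = u*(a*u - c)" using sa by simp
      then have us: "u*s = a*u^2 - c*u" by (simp add: algebra_simps power2_eq_square)
      have "(u-4*c)*(6*c-2*u) - 2*u*s = 14*c*u - 2*u^2 - 24*c^2 - 2*(u*s)"
        by (simp add: algebra_simps power2_eq_square)
      also have "\<dots> = 14*c*u - 2*u^2 - 24*c^2 - 2*(2*c*u - 4*c^2 + 1 - c*u)"
        unfolding us u_quad by simp
      also have "\<dots> = -2*((u-3*c)^2 + 1 - c^2)" by (simp add: algebra_simps power2_eq_square)
      finally show ?thesis .
    qed
    finally show ?thesis by simp
  qed
  have pos: "(u-3*c)^2 + 1 - c^2 > 0" using c_sq zero_le_power2[of "u-3*c"] by linarith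
  have "u^2 * (-2*((u-3*c)^2 + 1 - c^2)/s) < 0"
    using pos s_pos u_neg by (intro mult_pos_neg) (auto simp: divide_neg_pos)
  moreover have "(u^3)^2 > 0" using u_neg by simp
  ultimately show ?thesis unfolding E_def key by (rule divide_neg_pos)
qed

end

theorem lemma2p8:
  fixes a :: real
  assumes "-1 \<le> a" and "a \<le> 1/3" and "a \<noteq> 0"
  shows "strict_mono_on {2*pi/3<..<pi} (z_fun a)"
proof -
  define I where "I = {2*pi/3<..<pi}"
  have cosb: "-1 < cos t \<and> cos t < -1/2" if "t \<in> I" for t
  proof -
    have t: "2*pi/3 < t" "t < pi" using that by (auto simp: I_def)
    have "cos t < cos (2*pi/3)" using t by (intro cos_monotone_0_pi) auto
    moreover have "cos pi < cos t" using t by (intro cos_monotone_0_pi) auto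
    ultimately show ?thesis by (simp add: cos_120)
  qed
  have loc: "setup_ac a (cos t)" if "t \<in> I" for t
    using cosb[OF that] assms by unfold_locales auto
  have der: "DERIV (\<lambda>t. Gf a (cos t)) t :> setup_ac.E a (cos t) * - sin t" if "t \<in> I" for t
    using DERIV_chain2[OF setup_ac.G_deriv[OF loc[OF that]] DERIV_cos] .
  have derpos: "setup_ac.E a (cos t) * - sin t > 0" if "t \<in> I" for t
  proof -
    have "sin t > 0" using that pi_gt_zero by (intro sin_gt_zero) (auto simp: I_def)
    moreover have "setup_ac.E a (cos t) < 0" using setup_ac.E_neg[OF loc[OF that]] .
    ultimately show ?thesis by (simp add: mult_neg_pos)
  qed
  have zf: "z_fun a t = Gf a (cos t)" if "t \<in> I" for t
  proof (cases "1 - 4*a*(cos t)^2 \<noteq> 0")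
    case True
    then show ?thesis using setup_ac.zraw_eq[OF loc[OF that] refl] by (simp add: z_fun_def)
  next
    case False
    have ct: "isCont (\<lambda>t. Gf a (cos t)) t" using DERIV_isCont[OF der[OF that]] .
    then have l1: "((\<lambda>t. Gf a (cos t)) \<longlongrightarrow> Gf a (cos t)) (at t)" by (simp add: isCont_def)
    have ev: "eventually (\<lambda>x. x \<in> I) (at t)" using that by (intro eventually_at_in_open') (auto simp: I_def)
    have "eventually (\<lambda>x. Gf a (cos x) = z_raw a x) (at t)"
      using ev by eventually_elim (use setup_ac.zraw_eq[OF loc refl] in auto)
    from Lim_transform_eventually[OF l1 this] have "(z_raw a \<longlongrightarrow> Gf a (cos t)) (at t)" .
    then have "Lim (at t) (z_raw a) = Gf a (cos t)" by (intro tendsto_Lim) auto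
    then show ?thesis using False by (simp add: z_fun_def)
  qed
  show ?thesis unfolding I_def[symmetric]
  proof (rule strict_mono_onI)
    fix x y assume xy: "x \<in> I" "y \<in> I" "x < y"
    have "Gf a (cos x) < Gf a (cos y)"
    proof (rule DERIV_pos_imp_increasing[OF xy(3)])
      fix v assume "x \<le> v" "v \<le> y"
      then have "v \<in> I" using xy by (auto simp: I_def)
      then show "\<exists>d. DERIV (\<lambda>t. Gf a (cos t)) v :> d \<and> d > 0" using der derpos by blast
    qed
    then show "z_fun a x < z_fun a y" using zf xy by simp
  qed
qed

end
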